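(* Let $V$ be a finite-dimensional complex vector space, $\dim V=N$, with a direct sum decomposition $V=U\oplus W$, and let $V_\bullet=\{0\subset V_1\subset\dots\subset V_N=V\}$ be a full flag in $V$. Then there exist bases $\{e_1,\dots,e_N\}$ and $\{v_1,\dots,v_N\}$ of $V$ such that $\{e_1,\dots,e_N\}$ is compatible with the decomposition $V=U\oplus W$, $\{v_1,\dots,v_N\}$ is compatible with the flag $V_\bullet$, and each vector $v_i$ is equal either to some $e_l$ or to a sum $e_j+e_k$ with $e_j\in U$ and $e_k\in W$.
   Context: A full flag $V_\bullet$ in $V$ is a chain of subspaces $0\subset V_1\subset\dots\subset V_N=V$ with $\dim V_i=i$. A basis of $V$ is compatible with the flag $V_\bullet$ if every $V_i$ is spanned by some subset of the basis. A basis of $V$ is compatible with the decomposition $V=U\oplus W$ if each basis vector lies in $U$ or in $W$. *)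

theory Defs
  imports "HOL-Analysis.Analysis"
begin

definition full_flag :: "(nat \<Rightarrow> (complex ^ 'n) set) \<Rightarrow> bool" where
  "full_flag F \<longleftrightarrow>
     (\<forall>i\<le>CARD('n). vec.subspace (F i) \<and> vec.dim (F i) = i) \<and>
     (\<forall>i<CARD('n). F i \<subseteq> F (Suc i)) \<and>
     F CARD('n) = UNIV"

definition is_basis :: "(complex ^ 'n) set \<Rightarrow> bool" where
  "is_basis B \<longleftrightarrow> vec.independent B \<and> vec.span B = UNIV"

definition compatible_flag :: "(complex ^ 'n) set \<Rightarrow> (nat \<Rightarrow> (complex ^ 'n) set) \<Rightarrow> bool" where
  "compatible_flag B F \<longleftrightarrow> (\<forall>i\<in>{1..CARD('n)}. \<exists>S\<subseteq>B. vec.span S = F i)"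

definition compatible_decomp :: "(complex ^ 'n) set \<Rightarrow> (complex ^ 'n) set \<Rightarrow> (complex ^ 'n) set \<Rightarrow> bool" where
  "compatible_decomp B U W \<longleftrightarrow> (\<forall>b\<in>B. b \<in> U \<or> b \<in> W)"

definition direct_sum_decomp :: "(complex ^ 'n) set \<Rightarrow> (complex ^ 'n) set \<Rightarrow> bool" where
  "direct_sum_decomp U W \<longleftrightarrow> vec.subspace U \<and> vec.subspace W \<and> U \<inter> W = {0} \<and>
     {u + w | u w. u \<in> U \<and> w \<in> W} = UNIV"

end

theory Submission
  imports Defs
begin

lemma span_insert_span_eq: "vec.span (insert a (vec.span S)) = vec.span (insert a S)"
proof
  show "vec.span (insert a S) \<subseteq> vec.span (insert a (vec.span S))"
    by (intro vec.span_mono) (auto intro: vec.span_base)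
  have "insert a (vec.span S) \<subseteq> vec.span (insert a S)"
    using vec.span_mono[of S "insert a S"] by (auto intro: vec.span_base)
  then show "vec.span (insert a (vec.span S)) \<subseteq> vec.span (insert a S)"
    by (intro vec.span_minimal) auto
qed

locale setup_l =
  fixes U W :: "(complex ^ 'n) set" and F :: "nat \<Rightarrow> (complex ^ 'n) set"
  assumes ds: "direct_sum_decomp U W" and ff: "full_flag F"
begin


lemma subU: "vec.subspace U" and subW: "vec.subspace W" and UW0: "U \<inter> W = {0}"
  and UWall: "\<And>z. \<exists>u w. z = u + w \<and> u \<in> U \<and> w \<in> W"
  using ds unfolding direct_sum_decomp_def by blast+

lemma subF: "i \<le> CARD('n) \<Longrightarrow> vec.subspace (F i)" and dimF: "i \<le> CARD('n) \<Longrightarrow> vec.dim (F i) = i"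
  and sucF: "i < CARD('n) \<Longrightarrow> F i \<subseteq> F (Suc i)" and FN: "F CARD('n) = UNIV"
  using ff unfolding full_flag_def by blast+

lemma spanF: "i \<le> CARD('n) \<Longrightarrow> vec.span (F i) = F i"
  using subF vec.span_eq_iff by blast

lemma monoF: "i \<le> j \<Longrightarrow> j \<le> CARD('n) \<Longrightarrow> F i \<subseteq> F j"
proof (induction j)
  case 0 then show ?case by simp
next
  case (Suc j)
  then show ?case using sucF[of j] by (cases "i = Suc j") auto
qed

lemma F0: "F 0 = {0}"
proof -
  have "F 0 \<subseteq> {0}" using dimF[of 0] vec.dim_eq_0 by auto
  moreover have "0 \<in> F 0" using subF[of 0] vec.subspace_0 by auto
  ultimately show ?thesis by blast
qed

lemma stepF:
  assumes "1 \<le> k" "k \<le> CARD('n)" "y \<in> F k" "y \<notin> F (k-1)"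
  shows "F k = vec.span (insert y (F (k-1)))"
proof -
  have s1: "vec.subspace (F (k-1))" using subF assms by auto
  have sk: "vec.subspace (F k)" using subF assms by auto
  have inc: "F (k-1) \<subseteq> F k" using monoF assms by auto
  have sp: "vec.span (F (k-1)) = F (k-1)" by (rule spanF) (use assms in auto)
  have "y \<notin> vec.span (F (k-1))" unfolding sp using assms(4) .
  then have d: "vec.dim (insert y (F (k-1))) = k"
    using vec.dim_insert[of y "F (k-1)"] dimF[of "k-1"] assms by auto
  have sub: "insert y (F (k-1)) \<subseteq> F k" using inc assms by auto
  have "vec.span (insert y (F (k-1))) = vec.span (F k)"
    by (rule vec.dim_eq_span[OF sub]) (unfold d dimF[OF assms(2)], rule order_refl)
  then show ?thesis unfolding spanF[OF assms(2)] by (rule sym)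
qed

lemma nonemptyF: "1 \<le> k \<Longrightarrow> k \<le> CARD('n) \<Longrightarrow> \<exists>y\<in>F k. y \<notin> F (k-1)"
proof (rule ccontr)
  assume a: "1 \<le> k" "k \<le> CARD('n)" "\<not> (\<exists>y\<in>F k. y \<notin> F (k-1))"
  then have "F k \<subseteq> F (k-1)" by auto
  then have "vec.dim (F k) \<le> vec.dim (F (k-1))" by (rule vec.dim_subset)
  then show False using a dimF[of k] dimF[of "k-1"] by auto
qed

definition p :: "complex ^ 'n \<Rightarrow> complex ^ 'n" where
  "p z = (SOME u. u \<in> U \<and> z - u \<in> W)"

lemma p_props: "p z \<in> U" "z - p z \<in> W"
proof -
  obtain u w where "z = u + w" "u \<in> U" "w \<in> W" using UWall by blast
  then have "\<exists>u. u \<in> U \<and> z - u \<in> W" by (intro exI[of _ u]) auto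
  then have "p z \<in> U \<and> z - p z \<in> W" unfolding p_def by (rule someI_ex)
  then show "p z \<in> U" "z - p z \<in> W" by auto
qed

lemma p_unique: assumes "u \<in> U" "z - u \<in> W" shows "p z = u"
proof -
  have "p z - u \<in> U" using p_props assms subU vec.subspace_diff by blast
  moreover have "p z - u = (z - u) - (z - p z)" by simp
  then have "p z - u \<in> W" using p_props assms subW vec.subspace_diff by metis
  ultimately have "p z - u \<in> U \<inter> W" by blast
  then show ?thesis using UW0 by auto
qed

lemma p_lin: "p (a - c *s b) = p a - c *s p b"
proof (rule p_unique)
  show "p a - c *s p b \<in> U"
    using p_props subU vec.subspace_diff vec.subspace_scale by blast
  have eq: "a - c *s b - (p a - c *s p b) = (a - p a) - c *s (b - p b)"
    by (simp add: vec.scale_right_diff_distrib algebra_simps)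
  have "(a - p a) - c *s (b - p b) \<in> W"
    using p_props subW vec.subspace_diff vec.subspace_scale by blast
  then show "a - c *s b - (p a - c *s p b) \<in> W" by (subst eq)
qed

definition D :: "nat \<Rightarrow> bool" where
  "D i \<longleftrightarrow> 1 \<le> i \<and> i \<le> CARD('n) \<and> \<not> (\<exists>y\<in>F i. (y \<in> U \<or> y \<in> W) \<and> y \<notin> F (i-1))"

definition Pr :: "nat \<Rightarrow> nat \<Rightarrow> bool" where
  "Pr j k \<longleftrightarrow> (\<exists>x\<in>F j. x \<notin> F (j-1) \<and> p x \<in> F k)"

definition kk :: "nat \<Rightarrow> nat" where "kk j = (LEAST k. Pr j k)"

definition xx :: "nat \<Rightarrow> complex ^ 'n" where
  "xx j = (SOME x. x \<in> F j \<and> x \<notin> F (j-1) \<and> p x \<in> F (kk j))"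

lemma D_facts:
  assumes "D j"
  shows "xx j \<in> F j" "xx j \<notin> F (j-1)" "p (xx j) \<in> F (kk j)" "kk j \<le> CARD('n)" "1 \<le> kk j"
    "p (xx j) \<notin> F (kk j - 1)" "\<not> D (kk j)" "p (xx j) \<in> U" "xx j - p (xx j) \<in> W"
proof -
  have j: "1 \<le> j" "j \<le> CARD('n)" using assms D_def by auto
  have nD: "\<not> (\<exists>y\<in>F j. (y \<in> U \<or> y \<in> W) \<and> y \<notin> F (j-1))" using assms D_def by auto
  obtain y where y: "y \<in> F j" "y \<notin> F (j-1)" using nonemptyF[OF j] by blast
  have PN: "Pr j (CARD('n))" unfolding Pr_def FN using y by blast
  have Pk: "Pr j (kk j)" unfolding kk_def by (rule LeastI[of _ "CARD('n)"], rule PN)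
  show kN: "kk j \<le> CARD('n)" unfolding kk_def by (rule Least_le, rule PN)
  have ex: "\<exists>x. x \<in> F j \<and> x \<notin> F (j-1) \<and> p x \<in> F (kk j)" using Pk unfolding Pr_def by blast
  have "xx j \<in> F j \<and> xx j \<notin> F (j-1) \<and> p (xx j) \<in> F (kk j)"
    unfolding xx_def by (rule someI_ex[OF ex])
  then show x1: "xx j \<in> F j" and x2: "xx j \<notin> F (j-1)" and x3: "p (xx j) \<in> F (kk j)" by auto
  show pU: "p (xx j) \<in> U" "xx j - p (xx j) \<in> W" using p_props by auto
  show k1: "1 \<le> kk j"
  proof (rule ccontr)
    assume "\<not> 1 \<le> kk j"
    then have "kk j = 0" by simp
    then have "p (xx j) = 0" using x3 F0 by auto
    then have "xx j \<in> W" using pU by simp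
    then show False using nD x1 x2 by auto
  qed
  show nk: "p (xx j) \<notin> F (kk j - 1)"
  proof
    assume "p (xx j) \<in> F (kk j - 1)"
    then have "Pr j (kk j - 1)" using x1 x2 unfolding Pr_def by auto
    then have "kk j \<le> kk j - 1" unfolding kk_def by (rule Least_le)
    then show False using k1 by simp
  qed
  have "\<exists>y\<in>F (kk j). (y \<in> U \<or> y \<in> W) \<and> y \<notin> F (kk j - 1)"
    using x3 nk pU by auto
  then show "\<not> D (kk j)" unfolding D_def by auto
qed

lemma kk_inj_aux:
  assumes "D j" "D j'" "kk j = kk j'" "j < j'"
  shows False
proof -
  let ?k = "kk j"
  have k: "1 \<le> ?k" "?k \<le> CARD('n)" using D_facts assms by auto
  have "F ?k = vec.span (insert (p (xx j)) (F (?k - 1)))"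
    using stepF[OF k] D_facts[OF assms(1)] by auto
  moreover have "p (xx j') \<in> F ?k" using D_facts[OF assms(2)] assms(3) by simp
  ultimately obtain c where c: "p (xx j') - c *s p (xx j) \<in> vec.span (F (?k - 1))"
    using vec.span_insert by blast
  have s: "vec.subspace (F (?k - 1))" using subF k by auto
  define z where "z = xx j' - c *s xx j"
  have sp: "vec.span (F (?k - 1)) = F (?k - 1)" by (rule spanF) (use k in auto)
  have "p z \<in> F (?k - 1)" using c unfolding z_def p_lin sp .
  moreover have j': "1 \<le> j'" "j' \<le> CARD('n)" using assms(2) D_def by auto
  have m1: "F j \<subseteq> F (j'-1)" by (rule monoF) (use assms j' in auto)
  have m2: "F j \<subseteq> F j'" by (rule monoF) (use assms j' in auto)
  have "xx j \<in> F (j' - 1)" using D_facts(1)[OF assms(1)] m1 by blast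
  moreover have "xx j \<in> F j'" using D_facts(1)[OF assms(1)] m2 by blast
  have sj: "vec.subspace (F j')" "vec.subspace (F (j'-1))" using subF j' by auto
  have zin: "z \<in> F j'" unfolding z_def
    using sj D_facts[OF assms(2)] \<open>xx j \<in> F j'\<close> vec.subspace_diff vec.subspace_scale by blast
  have znot: "z \<notin> F (j'-1)"
  proof
    assume "z \<in> F (j'-1)"
    then have "z + c *s xx j \<in> F (j'-1)"
      using sj \<open>xx j \<in> F (j' - 1)\<close> vec.subspace_add vec.subspace_scale by blast
    then show False using D_facts[OF assms(2)] unfolding z_def by simp
  qed
  ultimately have "Pr j' (?k - 1)" using zin unfolding Pr_def by blast
  then have "kk j' \<le> ?k - 1" unfolding kk_def by (rule Least_le)
  then show False using assms(3) k by simp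
qed

lemma kk_inj: "D j \<Longrightarrow> D j' \<Longrightarrow> kk j = kk j' \<Longrightarrow> j = j'"
  using kk_inj_aux by (metis linorder_neqE_nat)

definition v :: "nat \<Rightarrow> complex ^ 'n" where
  "v i = (if \<exists>j. D j \<and> kk j = i then p (xx (SOME j. D j \<and> kk j = i))
          else if D i then xx i
          else (SOME y. y \<in> F i \<and> (y \<in> U \<or> y \<in> W) \<and> y \<notin> F (i-1)))"

lemma v_hit: "D j \<Longrightarrow> v (kk j) = p (xx j)"
proof -
  assume a: "D j"
  then have e: "\<exists>j'. D j' \<and> kk j' = kk j" by blast
  have "D (SOME j'. D j' \<and> kk j' = kk j) \<and> kk (SOME j'. D j' \<and> kk j' = kk j) = kk j"
    by (rule someI_ex[OF e])
  then have "(SOME j'. D j' \<and> kk j' = kk j) = j" using kk_inj a by blast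
  then show ?thesis unfolding v_def using e by simp
qed

lemma v_props:
  assumes "1 \<le> i" "i \<le> CARD('n)"
  shows "v i \<in> F i" "v i \<notin> F (i-1)" "\<not> D i \<Longrightarrow> v i \<in> U \<or> v i \<in> W" "D i \<Longrightarrow> v i = xx i"
proof -
  have "(v i \<in> F i \<and> v i \<notin> F (i-1)) \<and> (\<not> D i \<longrightarrow> v i \<in> U \<or> v i \<in> W) \<and> (D i \<longrightarrow> v i = xx i)"
  proof (cases "\<exists>j. D j \<and> kk j = i")
    case True
    then obtain j where j: "D j" "kk j = i" by blast
    then have "v i = p (xx j)" using v_hit by blast
    then show ?thesis using D_facts[OF j(1)] j by auto
  next
    case False
    show ?thesis
    proof (cases "D i")
      case True
      have "v i = xx i" unfolding v_def by (subst if_not_P[OF False], subst if_P[OF True]) (rule refl)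
      then show ?thesis using D_facts[OF True] True by auto
    next
      case nD: False
      then have e: "\<exists>y. y \<in> F i \<and> (y \<in> U \<or> y \<in> W) \<and> y \<notin> F (i-1)"
        using assms unfolding D_def by blast
      have "v i = (SOME y. y \<in> F i \<and> (y \<in> U \<or> y \<in> W) \<and> y \<notin> F (i-1))"
        unfolding v_def by (subst if_not_P[OF False], subst if_not_P[OF nD]) (rule refl)
      then show ?thesis using someI_ex[OF e] nD by auto
    qed
  qed
  then show "v i \<in> F i" "v i \<notin> F (i-1)" "\<not> D i \<Longrightarrow> v i \<in> U \<or> v i \<in> W" "D i \<Longrightarrow> v i = xx i"
    by auto
qed

lemma span_v: "i \<le> CARD('n) \<Longrightarrow> vec.span (v ` {1..i}) = F i"
proof (induction i)
  case 0 then show ?case using F0 by simp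
next
  case (Suc i)
  have e: "v ` {1..Suc i} = insert (v (Suc i)) (v ` {1..i})"
    by (auto simp: atLeastAtMostSuc_conv)
  have "vec.span (v ` {1..Suc i}) = vec.span (insert (v (Suc i)) (vec.span (v ` {1..i})))"
    unfolding e span_insert_span_eq ..
  also have "\<dots> = vec.span (insert (v (Suc i)) (F i))" using Suc by simp
  also have "\<dots> = F (Suc i)"
    using stepF[of "Suc i" "v (Suc i)"] v_props[of "Suc i"] Suc by simp
  finally show ?case .
qed

theorem main:
  "\<exists>E B. is_basis E \<and> is_basis B \<and> compatible_decomp E U W \<and> compatible_flag B F \<and>
           (\<forall>v\<in>B. v \<in> E \<or> (\<exists>ej\<in>E. \<exists>ek\<in>E. ej \<in> U \<and> ek \<in> W \<and> v = ej + ek))"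
proof -
  define B where "B = v ` {1..CARD('n)}"
  define E where "E = v ` {i\<in>{1..CARD('n)}. \<not> D i} \<union> (\<lambda>j. xx j - p (xx j)) ` {j\<in>{1..CARD('n)}. D j}"
  have dU: "vec.dim (UNIV :: (complex^'n) set) = CARD('n)" using dimF[of "CARD('n)"] FN by simp
  have spB: "vec.span B = UNIV" unfolding B_def using span_v[of "CARD('n)"] FN by simp
  have cB: "card B \<le> CARD('n)" unfolding B_def using card_image_le[of "{1..CARD('n)}" v] by simp
  have iB: "vec.independent B"
    by (rule vec.card_le_dim_spanning[of B UNIV]) (use spB cB dU in \<open>auto simp: B_def\<close>)
  have decomp: "\<forall>x\<in>B. x \<in> E \<or> (\<exists>ej\<in>E. \<exists>ek\<in>E. ej \<in> U \<and> ek \<in> W \<and> x = ej + ek)"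
  proof
    fix x assume "x \<in> B"
    then obtain i where i: "1 \<le> i" "i \<le> CARD('n)" "x = v i" unfolding B_def by auto
    show "x \<in> E \<or> (\<exists>ej\<in>E. \<exists>ek\<in>E. ej \<in> U \<and> ek \<in> W \<and> x = ej + ek)"
    proof (cases "D i")
      case False then show ?thesis using i unfolding E_def by auto
    next
      case True
      have x: "x = xx i" using v_props i True by auto
      have "p (xx i) = v (kk i)" using v_hit True by simp
      moreover have "kk i \<in> {1..CARD('n)}" "\<not> D (kk i)" using D_facts[OF True] by auto
      ultimately have "p (xx i) \<in> E" unfolding E_def by blast
      moreover have "xx i - p (xx i) \<in> E" unfolding E_def
        by (rule UnI2, rule imageI) (use i True in simp)
      ultimately show ?thesis using D_facts[OF True] x
        by (intro disjI2 bexI[of _ "p (xx i)"] bexI[of _ "xx i - p (xx i)"]) auto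
    qed
  qed
  have "B \<subseteq> vec.span E"
  proof
    fix x assume "x \<in> B"
    then show "x \<in> vec.span E" using decomp
      by (metis vec.span_add vec.span_base)
  qed
  then have spE: "vec.span E = UNIV" using spB
    by (metis top.extremum_uniqueI vec.span_minimal vec.subspace_span)
  have fin: "finite E" unfolding E_def by auto
  have "card E \<le> card {i\<in>{1..CARD('n)}. \<not> D i} + card {j\<in>{1..CARD('n)}. D j}"
    unfolding E_def by (rule order.trans[OF card_Un_le add_mono[OF card_image_le card_image_le]]) auto
  also have "\<dots> = card {1..CARD('n)}"
  proof -
    have "{i\<in>{1..CARD('n)}. \<not> D i} \<union> {j\<in>{1..CARD('n)}. D j} = {1..CARD('n)}" by auto
    moreover have "card ({i\<in>{1..CARD('n)}. \<not> D i} \<union> {j\<in>{1..CARD('n)}. D j}) =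
       card {i\<in>{1..CARD('n)}. \<not> D i} + card {j\<in>{1..CARD('n)}. D j}"
      by (rule card_Un_disjoint) auto
    ultimately show ?thesis by simp
  qed
  finally have cE: "card E \<le> CARD('n)" by simp
  have iE: "vec.independent E"
    by (rule vec.card_le_dim_spanning[of E UNIV]) (use spE cE dU fin in auto)
  have cd: "compatible_decomp E U W"
    unfolding compatible_decomp_def E_def using v_props D_facts by auto
  have cf: "compatible_flag B F"
    unfolding compatible_flag_def
  proof
    fix i assume "i \<in> {1..CARD('n)}"
    then have "v ` {1..i} \<subseteq> B" "vec.span (v ` {1..i}) = F i" using span_v unfolding B_def by auto
    then show "\<exists>S\<subseteq>B. vec.span S = F i" by blast
  qed
  show ?thesis
    using iB spB iE spE cd cf decomp unfolding is_basis_def by blast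
qed

end

theorem lemma1:
  fixes U W :: "(complex ^ 'n) set" and F :: "nat \<Rightarrow> (complex ^ 'n) set"
  assumes "direct_sum_decomp U W"
    and "full_flag F"
  shows "\<exists>E B. is_basis E \<and> is_basis B \<and> compatible_decomp E U W \<and> compatible_flag B F \<and>
           (\<forall>v\<in>B. v \<in> E \<or> (\<exists>ej\<in>E. \<exists>ek\<in>E. ej \<in> U \<and> ek \<in> W \<and> v = ej + ek))"
proof -
  interpret setup_l U W F using assms by unfold_locales
  show ?thesis by (rule main)
qed

end
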